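(* Let $\{|j\rangle\}_{j=1}^n$ be a fixed orthonormal (reference) basis of an $n$-dimensional Hilbert space, and let $Z_1,\dots,Z_n$ be Hermitian operators, all diagonal in the reference basis, with $\operatorname{tr}Z_jZ_k=\delta_{jk}$. Define, for a state $\rho$, \[ \mathcal{C}(\rho):=\min_{\{p_l,|\psi_l\rangle\}}\sum_lp_l\,\mathcal{F}_1\Big(e^{i\sum_j\theta_jZ_j}|\psi_l\rangle\langle\psi_l|e^{-i\sum_j\theta_jZ_j}\Big), \] the minimum over all ensemble decompositions $\rho=\sum_lp_l|\psi_l\rangle\langle\psi_l|$. Then for every state $\rho$, \[ 0\le\mathcal{C}(\rho)\le\frac{4(n-1)}{n^2}, \] and the upper bound is attained by $\rho=|\psi\rangle\langle\psi|$ with $|\psi\rangle=\frac1{\sqrt n}\sum_{j=1}^ne^{i\phi_j}|j\rangle$ for arbitrary real phases $\phi_j$.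
   Context: The arithmetic-mean QFI of a family $\varrho_\theta$, $\theta\in\mathbb{R}^n$, is $\mathcal{F}_1(\varrho_\theta):=\frac1n\operatorname{tr}F(\varrho_\theta)$, with $F$ the SLD-based QFI matrix $[F]_{jk}=\operatorname{Re}\operatorname{tr}(L_jL_k\varrho_\theta)$, $L_j$ Hermitian with $\partial_j\varrho_\theta=(L_j\varrho_\theta+\varrho_\theta L_j)/2$. *)

theory Defs
  imports "HOL-Analysis.Analysis"
begin

text \<open>Operators on the n-dimensional Hilbert space C^n, n = CARD('n), written in the
  fixed reference (standard) basis. Matrices are complex^'n^'n.\<close>

definition cadj :: "complex^'n^'n \<Rightarrow> complex^'n^'n" where
  "cadj A = (\<chi> i j. cnj (A $ j $ i))"

definition hermitian :: "complex^'n^'n \<Rightarrow> bool" where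
  "hermitian A \<longleftrightarrow> cadj A = A"

definition diagonal_op :: "complex^'n^'n \<Rightarrow> bool" where
  "diagonal_op A \<longleftrightarrow> (\<forall>i j. i \<noteq> j \<longrightarrow> A $ i $ j = 0)"

definition psd :: "complex^'n^'n \<Rightarrow> bool" where
  "psd A \<longleftrightarrow> (\<forall>v::complex^'n. let q = (\<Sum>i\<in>UNIV. \<Sum>j\<in>UNIV. cnj (v $ i) * A $ i $ j * v $ j)
                                  in Im q = 0 \<and> Re q \<ge> 0)"

definition density :: "complex^'n^'n \<Rightarrow> bool" where
  "density \<rho> \<longleftrightarrow> hermitian \<rho> \<and> psd \<rho> \<and> trace \<rho> = 1"

definition proj :: "complex^'n \<Rightarrow> complex^'n^'n" where
  "proj \<psi> = (\<chi> i j. \<psi> $ i * cnj (\<psi> $ j))"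

primrec mpow :: "complex^'n^'n \<Rightarrow> nat \<Rightarrow> complex^'n^'n" where
  "mpow A 0 = mat 1"
| "mpow A (Suc k) = A ** mpow A k"

definition mexp :: "complex^'n^'n \<Rightarrow> complex^'n^'n" where
  "mexp A = (\<Sum>k. (1 / fact k) *\<^sub>R mpow A k)"

definition dpart :: "(real^'m \<Rightarrow> complex^'n^'n) \<Rightarrow> real^'m \<Rightarrow> 'm \<Rightarrow> complex^'n^'n" where
  "dpart f \<theta> j = vector_derivative (\<lambda>t. f (\<theta> + t *\<^sub>R axis j 1)) (at 0)"

text \<open>SLD-based QFI matrix: [F]_jk = Re tr(L_j L_k rho_theta), with L_j Hermitian and
  d_j rho = (L_j rho + rho L_j)/2 (the value does not depend on the choice of SLDs).\<close>
definition qfi_matrix :: "(real^'m \<Rightarrow> complex^'n^'n) \<Rightarrow> real^'m \<Rightarrow> 'm \<Rightarrow> 'm \<Rightarrow> real" where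
  "qfi_matrix f \<theta> j k =
     (let L = (SOME L. \<forall>j. hermitian (L j) \<and>
                 dpart f \<theta> j = (1/2 :: real) *\<^sub>R (L j ** f \<theta> + f \<theta> ** L j))
      in Re (trace (L j ** L k ** f \<theta>)))"

definition qfi_mean :: "(real^'m \<Rightarrow> complex^'n^'n) \<Rightarrow> real^'m \<Rightarrow> real" where
  "qfi_mean f \<theta> = (1 / real CARD('m)) * (\<Sum>j\<in>UNIV. qfi_matrix f \<theta> j j)"

definition Ugen :: "('n \<Rightarrow> complex^'n^'n) \<Rightarrow> real^'n \<Rightarrow> complex^'n^'n" where
  "Ugen Z \<theta> = mexp (\<chi> a b. \<i> * (\<Sum>j\<in>UNIV. complex_of_real (\<theta> $ j) * Z j $ a $ b))"

definition ensemble :: "complex^'n^'n \<Rightarrow> nat \<Rightarrow> (nat \<Rightarrow> real) \<Rightarrow> (nat \<Rightarrow> complex^'n) \<Rightarrow> bool" where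
  "ensemble \<rho> m p \<psi> \<longleftrightarrow> (\<forall>l<m. p l \<ge> 0 \<and> norm (\<psi> l) = 1) \<and> (\<Sum>l<m. p l) = 1 \<and>
      \<rho> = (\<Sum>l<m. p l *\<^sub>R proj (\<psi> l))"

text \<open>C(rho), evaluated at parameter point theta (the pure-state QFI of the unitary family does
  not depend on theta). The minimum over decompositions is written as an infimum.\<close>
definition Cmeas :: "('n \<Rightarrow> complex^'n^'n) \<Rightarrow> complex^'n^'n \<Rightarrow> real^'n \<Rightarrow> real" where
  "Cmeas Z \<rho> \<theta> = Inf {(\<Sum>l<m. p l * qfi_mean (\<lambda>\<theta>'. Ugen Z \<theta>' ** proj (\<psi> l) ** cadj (Ugen Z \<theta>')) \<theta>)
                        | m p \<psi>. ensemble \<rho> m p \<psi>}"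

end

theory Submission
  imports Defs
begin


definition dg :: "('n::finite \<Rightarrow> complex) \<Rightarrow> complex^'n^'n" where
  "dg d = (\<chi> a b. if a = b then d a else 0)"

lemma dg_mult: "dg d ** dg e = dg (\<lambda>a. d a * e a)"
proof -
  have "(\<Sum>k\<in>UNIV. (if i = k then d i else 0) * (if k = j then e k else 0)) = (if i = j then d i * e i else 0)" for i j
  proof -
    have "(\<Sum>k\<in>UNIV. (if i = k then d i else 0) * (if k = j then e k else 0)) = (\<Sum>k\<in>UNIV. if k = i then d i * (if k = j then e k else 0) else 0)"
      by (rule sum.cong) auto
    also have "\<dots> = (if i = j then d i * e i else 0)" by simp
    finally show ?thesis .
  qed
  then show ?thesis by (simp add: dg_def matrix_matrix_mult_def vec_eq_iff)
qed

lemma mpow_dg: "mpow (dg d) k = dg (\<lambda>a. d a ^ k)"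
proof (induct k)
  case 0 show ?case by (simp add: mat_def dg_def)
next
  case (Suc k) show ?case by (simp only: mpow.simps Suc dg_mult) simp
qed

lemma vec_has_vector_derivative:
  fixes f :: "real \<Rightarrow> 'a::real_normed_vector^'n"
  assumes "\<And>i. ((\<lambda>x. f x $ i) has_vector_derivative f' $ i) F"
  shows "(f has_vector_derivative f') F"
  using assms unfolding has_vector_derivative_def has_derivative_def
  by (auto intro!: vec_tendstoI bounded_linear_scaleR_left)

lemma mexp_dg: "mexp (dg d) = dg (\<lambda>a. exp (d a))"
proof -
  have "(\<lambda>k. (1 / fact k) *\<^sub>R mpow (dg d) k) sums dg (\<lambda>a. exp (d a))"
    unfolding sums_def
  proof (intro vec_tendstoI)
    fix i j
    show "((\<lambda>n. (\<Sum>k<n. (1 / fact k) *\<^sub>R mpow (dg d) k) $ i $ j) \<longlongrightarrow> dg (\<lambda>a. exp (d a)) $ i $ j) sequentially"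
    proof (cases "i = j")
      case True
      then show ?thesis using exp_converges[of "d i", unfolded sums_def]
        unfolding mpow_dg by (simp add: dg_def sum_component divide_inverse_commute)
    next
      case False
      then show ?thesis unfolding mpow_dg by (simp add: dg_def sum_component)
    qed
  qed
  then show ?thesis unfolding mexp_def by (rule sums_unique[symmetric])
qed

lemma dg_mult_left: "dg e ** M = (\<chi> a b. e a * M $ a $ b)"
proof -
  have "(\<Sum>k\<in>UNIV. (if a = k then e a else 0) * M $ k $ b) = e a * M $ a $ b" for a b
  proof -
    have "(\<Sum>k\<in>UNIV. (if a = k then e a else 0) * M $ k $ b) = (\<Sum>k\<in>UNIV. if k = a then e a * M $ k $ b else 0)"
      by (rule sum.cong) auto
    then show ?thesis by simp
  qed
  then show ?thesis by (simp add: dg_def matrix_matrix_mult_def vec_eq_iff)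
qed

lemma dg_mult_right: "M ** dg e = (\<chi> a b. M $ a $ b * e b)"
proof -
  have "(\<Sum>k\<in>UNIV. M $ a $ k * (if k = b then e k else 0)) = M $ a $ b * e b" for a b
  proof -
    have "(\<Sum>k\<in>UNIV. M $ a $ k * (if k = b then e k else 0)) = (\<Sum>k\<in>UNIV. if k = b then M $ a $ k * e k else 0)"
      by (rule sum.cong) auto
    then show ?thesis by simp
  qed
  then show ?thesis by (simp add: dg_def matrix_matrix_mult_def vec_eq_iff)
qed

lemma cadj_dg: "cadj (dg e) = dg (\<lambda>a. cnj (e a))"
  by (simp add: cadj_def dg_def vec_eq_iff)

lemma conj_proj: "dg e ** proj \<psi> ** cadj (dg e) = proj (\<chi> a. e a * \<psi> $ a)"
  by (simp add: dg_mult_left dg_mult_right cadj_dg proj_def vec_eq_iff)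

lemma herm_diag_real: "hermitian A \<Longrightarrow> A $ a $ a = complex_of_real (Re (A $ a $ a))"
proof -
  assume "hermitian A"
  then have "cadj A $ a $ a = A $ a $ a" by (simp add: hermitian_def)
  then have "cnj (A $ a $ a) = A $ a $ a" by (simp add: cadj_def)
  then show ?thesis by (metis Reals_cnj_iff of_real_Re)
qed

definition zr :: "('n::finite \<Rightarrow> complex^'n^'n) \<Rightarrow> 'n \<Rightarrow> 'n \<Rightarrow> real" where
  "zr Z j a = Re (Z j $ a $ a)"

definition rr :: "('n::finite \<Rightarrow> complex^'n^'n) \<Rightarrow> real^'n \<Rightarrow> 'n \<Rightarrow> real" where
  "rr Z \<theta> a = (\<Sum>j\<in>UNIV. \<theta> $ j * zr Z j a)"

lemma Ugen_dg:
  assumes herm: "\<And>j. hermitian (Z j)" and diag: "\<And>j. diagonal_op (Z j)"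
  shows "Ugen Z \<theta> = dg (\<lambda>a. cis (rr Z \<theta> a))"
proof -
  have "(\<chi> a b. \<i> * (\<Sum>j\<in>UNIV. complex_of_real (\<theta> $ j) * Z j $ a $ b)) = dg (\<lambda>a. \<i> * complex_of_real (rr Z \<theta> a))"
  proof -
    have "(\<Sum>j\<in>UNIV. complex_of_real (\<theta> $ j) * Z j $ a $ b) = (if a = b then complex_of_real (rr Z \<theta> a) else 0)" for a b
    proof (cases "a = b")
      case True
      have "(\<Sum>j\<in>UNIV. complex_of_real (\<theta> $ j) * Z j $ a $ a) = (\<Sum>j\<in>UNIV. complex_of_real (\<theta> $ j * zr Z j a))"
        by (rule sum.cong; simp add: zr_def) (metis herm herm_diag_real)
      then show ?thesis using True by (simp add: rr_def)
    next
      case False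
      then show ?thesis using diag by (simp add: diagonal_op_def)
    qed
    then show ?thesis by (simp add: dg_def vec_eq_iff)
  qed
  then show ?thesis unfolding Ugen_def by (simp add: mexp_dg cis_conv_exp)
qed



lemma rr_shift: "rr Z (\<theta> + t *\<^sub>R axis j 1) a = rr Z \<theta> a + t * zr Z j a"
proof -
  have "rr Z (\<theta> + t *\<^sub>R axis j 1) a = (\<Sum>k\<in>UNIV. \<theta> $ k * zr Z k a + (if k = j then t * zr Z j a else 0))"
    unfolding rr_def by (rule sum.cong) (auto simp: axis_def algebra_simps)
  then show ?thesis by (simp add: sum.distrib rr_def)
qed

lemma cis_deriv:
  "((\<lambda>t::real. cis (\<alpha> + t * \<beta>) * c) has_vector_derivative (\<i> * complex_of_real \<beta> * cis \<alpha> * c)) (at 0)"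
proof -
  have "((\<lambda>z. exp (\<i> * (complex_of_real \<alpha> + z * complex_of_real \<beta>)) * c) has_field_derivative
          (exp (\<i> * (complex_of_real \<alpha> + of_real 0 * complex_of_real \<beta>)) * (\<i> * complex_of_real \<beta>) * c)) (at (of_real 0))"
    by (auto intro!: derivative_eq_intros)
  from has_vector_derivative_real_field[OF this, of UNIV]
  show ?thesis by (simp add: cis_conv_exp algebra_simps)
qed

definition psi' :: "('n::finite \<Rightarrow> complex^'n^'n) \<Rightarrow> complex^'n \<Rightarrow> real^'n \<Rightarrow> complex^'n" where
  "psi' Z \<psi> \<theta> = (\<chi> a. cis (rr Z \<theta> a) * \<psi> $ a)"

lemma dpart_eq:
  "dpart (\<lambda>\<theta>. proj (psi' Z \<psi> \<theta>)) \<theta> j =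
     (\<chi> a b. \<i> * complex_of_real (zr Z j a - zr Z j b) * proj (psi' Z \<psi> \<theta>) $ a $ b)"
  unfolding dpart_def
proof (rule vector_derivative_at, intro vec_has_vector_derivative)
  fix a b
  have eq: "(\<lambda>t. proj (psi' Z \<psi> (\<theta> + t *\<^sub>R axis j 1)) $ a $ b) =
     (\<lambda>t. cis ((rr Z \<theta> a - rr Z \<theta> b) + t * (zr Z j a - zr Z j b)) * (\<psi> $ a * cnj (\<psi> $ b)))"
  proof
    fix t
    have "cis (rr Z \<theta> a + t * zr Z j a) * cnj (cis (rr Z \<theta> b + t * zr Z j b)) =
        cis ((rr Z \<theta> a - rr Z \<theta> b) + t * (zr Z j a - zr Z j b))"
      by (simp add: cis_cnj cis_mult algebra_simps)
    then show "proj (psi' Z \<psi> (\<theta> + t *\<^sub>R axis j 1)) $ a $ b =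
      cis ((rr Z \<theta> a - rr Z \<theta> b) + t * (zr Z j a - zr Z j b)) * (\<psi> $ a * cnj (\<psi> $ b))"
      by (simp add: proj_def psi'_def rr_shift)
  qed
  have val: "\<i> * complex_of_real (zr Z j a - zr Z j b) * cis (rr Z \<theta> a - rr Z \<theta> b) * (\<psi> $ a * cnj (\<psi> $ b))
     = (\<chi> a b. \<i> * complex_of_real (zr Z j a - zr Z j b) * proj (psi' Z \<psi> \<theta>) $ a $ b) $ a $ b"
    by (simp add: proj_def psi'_def cis_cnj flip: cis_divide) (simp add: divide_complex_def cis_cnj[symmetric] algebra_simps)
  show "((\<lambda>t. proj (psi' Z \<psi> (\<theta> + t *\<^sub>R axis j 1)) $ a $ b) has_vector_derivative
     (\<chi> a b. \<i> * complex_of_real (zr Z j a - zr Z j b) * proj (psi' Z \<psi> \<theta>) $ a $ b) $ a $ b) (at 0)"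
    unfolding eq val[symmetric] by (rule cis_deriv)
qed



lemma cmod_sq_c: "complex_of_real ((cmod x)^2) = cnj x * x"
  by (metis complex_norm_square mult.commute of_real_power)

lemma mm_comp: "(A ** B) $ i $ j = (\<Sum>k\<in>UNIV. A $ i $ k * B $ k $ j)"
  by (simp add: matrix_matrix_mult_def)

lemma sld_value:
  fixes \<phi> :: "complex^'n::finite" and z :: "'n \<Rightarrow> real" and L :: "complex^'n^'n"
  assumes unit: "(\<Sum>a\<in>UNIV. (cmod (\<phi> $ a))^2) = 1"
    and herm: "hermitian L"
    and eq: "(\<chi> a b. \<i> * complex_of_real (z a - z b) * proj \<phi> $ a $ b) = (1/2::real) *\<^sub>R (L ** proj \<phi> + proj \<phi> ** L)"
  shows "Re (trace (L ** L ** proj \<phi>)) =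
     4 * (\<Sum>a\<in>UNIV. (cmod (\<phi> $ a))^2 * (z a - (\<Sum>b\<in>UNIV. (cmod (\<phi> $ b))^2 * z b))^2)"
proof -
  define v where "v = (\<lambda>a. \<Sum>b\<in>UNIV. L $ a $ b * \<phi> $ b)"
  define m where "m = (\<Sum>b\<in>UNIV. (cmod (\<phi> $ b))^2 * z b)"
  define t where "t = (\<Sum>b\<in>UNIV. cnj (v b) * \<phi> $ b)"
  have Lh: "L $ a $ b = cnj (L $ b $ a)" for a b
  proof -
    have "cadj L $ a $ b = L $ a $ b" using herm by (simp add: hermitian_def)
    then show ?thesis by (simp add: cadj_def)
  qed
  have unitc: "(\<Sum>b\<in>UNIV. cnj (\<phi> $ b) * \<phi> $ b) = 1"
  proof -
    have "(\<Sum>b\<in>UNIV. cnj (\<phi> $ b) * \<phi> $ b) = complex_of_real (\<Sum>a\<in>UNIV. (cmod (\<phi> $ a))^2)"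
      by (simp only: of_real_sum cmod_sq_c)
    then show ?thesis using unit by simp
  qed
  have mc: "(\<Sum>b\<in>UNIV. cnj (\<phi> $ b) * \<phi> $ b * complex_of_real (z b)) = complex_of_real m"
    by (simp only: m_def of_real_sum of_real_mult cmod_sq_c)
  have LP: "(L ** proj \<phi>) $ a $ b = v a * cnj (\<phi> $ b)" for a b
    by (simp add: matrix_matrix_mult_def proj_def v_def sum_distrib_right mult.assoc)
  have PL: "(proj \<phi> ** L) $ a $ b = \<phi> $ a * cnj (v b)" for a b
  proof -
    have "(proj \<phi> ** L) $ a $ b = (\<Sum>c\<in>UNIV. \<phi> $ a * (cnj (\<phi> $ c) * cnj (L $ b $ c)))"
      by (simp add: matrix_matrix_mult_def proj_def mult.assoc) (metis Lh)
    also have "\<dots> = \<phi> $ a * cnj (v b)"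
      by (simp add: v_def sum_distrib_left mult.commute)
    finally show ?thesis .
  qed
  have D: "\<i> * complex_of_real (z a - z b) * (\<phi> $ a * cnj (\<phi> $ b)) = (v a * cnj (\<phi> $ b) + \<phi> $ a * cnj (v b)) / 2" for a b
  proof -
    have "(\<chi> a b. \<i> * complex_of_real (z a - z b) * proj \<phi> $ a $ b) $ a $ b = ((1/2::real) *\<^sub>R (L ** proj \<phi> + proj \<phi> ** L)) $ a $ b"
      using eq by simp
    then show ?thesis by (simp only: vec_lambda_beta vector_scaleR_component vector_add_component LP PL)
        (simp add: proj_def scaleR_conv_of_real)
  qed
  have V: "v a = 2 * \<i> * \<phi> $ a * complex_of_real (z a - m) - \<phi> $ a * t" for a
  proof -
    have h1: "(\<Sum>b\<in>UNIV. \<i> * complex_of_real (z a - z b) * (\<phi> $ a * cnj (\<phi> $ b)) * \<phi> $ b)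
        = (\<Sum>b\<in>UNIV. (v a * cnj (\<phi> $ b) + \<phi> $ a * cnj (v b)) / 2 * \<phi> $ b)"
      by (rule sum.cong[OF refl], subst D, rule refl)
    have h2: "(\<Sum>b\<in>UNIV. \<i> * complex_of_real (z a - z b) * (\<phi> $ a * cnj (\<phi> $ b)) * \<phi> $ b)
        = \<i> * \<phi> $ a * (complex_of_real (z a) * (\<Sum>b\<in>UNIV. cnj (\<phi> $ b) * \<phi> $ b) - (\<Sum>b\<in>UNIV. cnj (\<phi> $ b) * \<phi> $ b * complex_of_real (z b)))"
      by (simp add: sum_distrib_left sum_subtractf algebra_simps flip: sum_diff_distrib)
    have h3: "(\<Sum>b\<in>UNIV. (v a * cnj (\<phi> $ b) + \<phi> $ a * cnj (v b)) / 2 * \<phi> $ b)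
        = (v a * (\<Sum>b\<in>UNIV. cnj (\<phi> $ b) * \<phi> $ b) + \<phi> $ a * t) / 2"
      by (simp add: t_def sum_distrib_left sum.distrib add_divide_distrib algebra_simps flip: sum_divide_distrib)
    have e: "(v a * (\<Sum>b\<in>UNIV. cnj (\<phi> $ b) * \<phi> $ b) + \<phi> $ a * t) / 2 = \<i> * \<phi> $ a * (complex_of_real (z a) * (\<Sum>b\<in>UNIV. cnj (\<phi> $ b) * \<phi> $ b) - (\<Sum>b\<in>UNIV. cnj (\<phi> $ b) * \<phi> $ b * complex_of_real (z b)))"
      using trans[OF trans[OF h3[symmetric] h1[symmetric]] h2] .
    have "(v a + \<phi> $ a * t) / 2 = \<i> * \<phi> $ a * (complex_of_real (z a) - complex_of_real m)"
      using e unfolding unitc mc by simp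
    then have "v a + \<phi> $ a * t = 2 * (\<i> * \<phi> $ a * (complex_of_real (z a) - complex_of_real m))"
      by (simp add: divide_eq_eq mult.commute)
    then have "v a = 2 * (\<i> * \<phi> $ a * (complex_of_real (z a) - complex_of_real m)) - \<phi> $ a * t"
      by (simp add: eq_diff_eq)
    then show ?thesis by (simp only: of_real_diff mult.assoc)
  qed
  have treal: "cnj t = t"
  proof -
    have "cnj t = (\<Sum>b\<in>UNIV. \<Sum>c\<in>UNIV. L $ b $ c * \<phi> $ c * cnj (\<phi> $ b))"
      by (simp add: t_def v_def sum_distrib_right)
    also have "\<dots> = (\<Sum>c\<in>UNIV. \<Sum>b\<in>UNIV. L $ b $ c * \<phi> $ c * cnj (\<phi> $ b))"
      by (rule sum.swap)
    also have "\<dots> = (\<Sum>c\<in>UNIV. \<Sum>b\<in>UNIV. cnj (L $ c $ b) * cnj (\<phi> $ b) * \<phi> $ c)"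
      by (intro sum.cong refl) (subst Lh, simp)
    also have "\<dots> = t"
      by (simp add: t_def v_def sum_distrib_right)
    finally show ?thesis .
  qed
  have "cnj t = (\<Sum>b\<in>UNIV. v b * cnj (\<phi> $ b))" by (simp add: t_def)
  also have "\<dots> = (\<Sum>b\<in>UNIV. 2 * \<i> * (cnj (\<phi> $ b) * \<phi> $ b * complex_of_real (z b)) - 2 * \<i> * complex_of_real m * (cnj (\<phi> $ b) * \<phi> $ b) - (cnj (\<phi> $ b) * \<phi> $ b) * t)"
    by (intro sum.cong refl) (simp add: V algebra_simps)
  also have "\<dots> = 2 * \<i> * (\<Sum>b\<in>UNIV. cnj (\<phi> $ b) * \<phi> $ b * complex_of_real (z b)) - 2 * \<i> * complex_of_real m * (\<Sum>b\<in>UNIV. cnj (\<phi> $ b) * \<phi> $ b) - (\<Sum>b\<in>UNIV. cnj (\<phi> $ b) * \<phi> $ b) * t"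
    by (simp only: sum_subtractf sum_distrib_left sum_distrib_right)
  also have "\<dots> = - t"
    unfolding mc unitc by simp
  finally have "cnj t = - t" .
  then have "t = - t" using treal by simp
  then have "t = 0" by simp
  then have V0: "v a = 2 * \<i> * \<phi> $ a * complex_of_real (z a - m)" for a using V by simp
  have tr: "trace (L ** L ** proj \<phi>) = (\<Sum>c\<in>UNIV. v c * cnj (v c))"
  proof -
    have "trace (L ** L ** proj \<phi>) = trace (L ** (L ** proj \<phi>))" by (simp add: matrix_mul_assoc)
    also have "\<dots> = (\<Sum>a\<in>UNIV. \<Sum>c\<in>UNIV. L $ a $ c * (v c * cnj (\<phi> $ a)))"
      by (simp add: trace_def mm_comp[of L "L ** proj \<phi>"] LP)
    also have "\<dots> = (\<Sum>c\<in>UNIV. \<Sum>a\<in>UNIV. L $ a $ c * (v c * cnj (\<phi> $ a)))"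
      by (rule sum.swap)
    also have "\<dots> = (\<Sum>c\<in>UNIV. \<Sum>a\<in>UNIV. v c * cnj (L $ c $ a * \<phi> $ a))"
      by (intro sum.cong refl) (subst Lh, simp)
    also have "\<dots> = (\<Sum>c\<in>UNIV. v c * cnj (v c))"
      by (simp add: v_def sum_distrib_left)
    finally show ?thesis .
  qed
  have vc: "v c * cnj (v c) = complex_of_real (4 * ((cmod (\<phi> $ c))^2 * (z c - m)^2))" for c
  proof -
    have "v c * cnj (v c) = 4 * (cnj (\<phi> $ c) * \<phi> $ c) * complex_of_real ((z c - m)^2)"
      by (simp add: V0 power2_eq_square algebra_simps)
    also have "\<dots> = complex_of_real (4 * ((cmod (\<phi> $ c))^2 * (z c - m)^2))"
      by (simp only: cmod_sq_c of_real_mult of_real_numeral mult.assoc)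
    finally show ?thesis .
  qed
  have "(\<Sum>c\<in>UNIV. v c * cnj (v c)) = (\<Sum>c\<in>UNIV. complex_of_real (4 * ((cmod (\<phi> $ c))^2 * (z c - m)^2)))"
    by (rule sum.cong[OF refl]) (rule vc)
  also have "\<dots> = complex_of_real (4 * (\<Sum>a\<in>UNIV. (cmod (\<phi> $ a))^2 * (z a - m)^2))"
    by (simp only: of_real_sum sum_distrib_left)
  finally have "(\<Sum>c\<in>UNIV. v c * cnj (v c)) = complex_of_real (4 * (\<Sum>a\<in>UNIV. (cmod (\<phi> $ a))^2 * (z a - m)^2))" .
  then show ?thesis using tr m_def by simp
qed



lemma scaleR_mm_left: "((c::real) *\<^sub>R (A::complex^'n::finite^'n)) ** B = c *\<^sub>R (A ** B)"
  by (simp add: vec_eq_iff mm_comp scaleR_sum_right)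

lemma scaleR_mm_right: "(A::complex^'n::finite^'n) ** ((c::real) *\<^sub>R B) = c *\<^sub>R (A ** B)"
  by (simp add: vec_eq_iff mm_comp scaleR_sum_right)

lemma sld_exists:
  fixes \<phi> :: "complex^'n::finite" and z :: "'n \<Rightarrow> real"
  assumes unit: "(\<Sum>a\<in>UNIV. (cmod (\<phi> $ a))^2) = 1"
  defines "D \<equiv> (\<chi> a b. \<i> * complex_of_real (z a - z b) * proj \<phi> $ a $ b)"
  shows "hermitian ((2::real) *\<^sub>R D) \<and> D = (1/2::real) *\<^sub>R (((2::real) *\<^sub>R D) ** proj \<phi> + proj \<phi> ** ((2::real) *\<^sub>R D))"
proof
  show "hermitian ((2::real) *\<^sub>R D)"
    by (simp add: hermitian_def cadj_def D_def proj_def vec_eq_iff algebra_simps)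
  define m where "m = (\<Sum>b\<in>UNIV. (cmod (\<phi> $ b))^2 * z b)"
  have unitc: "(\<Sum>b\<in>UNIV. cnj (\<phi> $ b) * \<phi> $ b) = 1"
  proof -
    have "(\<Sum>b\<in>UNIV. cnj (\<phi> $ b) * \<phi> $ b) = complex_of_real (\<Sum>a\<in>UNIV. (cmod (\<phi> $ a))^2)"
      by (simp only: of_real_sum cmod_sq_c)
    then show ?thesis using unit by simp
  qed
  have mc: "(\<Sum>b\<in>UNIV. cnj (\<phi> $ b) * \<phi> $ b * complex_of_real (z b)) = complex_of_real m"
    by (simp only: m_def of_real_sum of_real_mult cmod_sq_c)
  have DP: "(D ** proj \<phi>) $ a $ b = \<i> * \<phi> $ a * cnj (\<phi> $ b) * (complex_of_real (z a) - complex_of_real m)" for a b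
  proof -
    have "(D ** proj \<phi>) $ a $ b = (\<Sum>c\<in>UNIV. \<i> * \<phi> $ a * cnj (\<phi> $ b) * (complex_of_real (z a) * (cnj (\<phi> $ c) * \<phi> $ c) - cnj (\<phi> $ c) * \<phi> $ c * complex_of_real (z c)))"
      by (simp add: mm_comp D_def proj_def algebra_simps)
    also have "\<dots> = \<i> * \<phi> $ a * cnj (\<phi> $ b) * (complex_of_real (z a) * (\<Sum>c\<in>UNIV. cnj (\<phi> $ c) * \<phi> $ c) - (\<Sum>c\<in>UNIV. cnj (\<phi> $ c) * \<phi> $ c * complex_of_real (z c)))"
      by (simp add: sum_distrib_left sum_subtractf right_diff_distrib)
    finally show ?thesis unfolding unitc mc by simp
  qed
  have PD: "(proj \<phi> ** D) $ a $ b = \<i> * \<phi> $ a * cnj (\<phi> $ b) * (complex_of_real m - complex_of_real (z b))" for a b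
  proof -
    have "(proj \<phi> ** D) $ a $ b = (\<Sum>c\<in>UNIV. \<i> * \<phi> $ a * cnj (\<phi> $ b) * (cnj (\<phi> $ c) * \<phi> $ c * complex_of_real (z c) - complex_of_real (z b) * (cnj (\<phi> $ c) * \<phi> $ c)))"
      by (simp add: mm_comp D_def proj_def algebra_simps)
    also have "\<dots> = \<i> * \<phi> $ a * cnj (\<phi> $ b) * ((\<Sum>c\<in>UNIV. cnj (\<phi> $ c) * \<phi> $ c * complex_of_real (z c)) - complex_of_real (z b) * (\<Sum>c\<in>UNIV. cnj (\<phi> $ c) * \<phi> $ c))"
      by (simp add: sum_distrib_left sum_subtractf right_diff_distrib)
    finally show ?thesis unfolding unitc mc by simp
  qed
  have "D = D ** proj \<phi> + proj \<phi> ** D"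
    unfolding vec_eq_iff
  proof (intro allI)
    fix a b
    have "D $ a $ b = (D ** proj \<phi>) $ a $ b + (proj \<phi> ** D) $ a $ b"
      unfolding DP PD by (simp add: D_def proj_def algebra_simps)
    then show "D $ a $ b = (D ** proj \<phi> + proj \<phi> ** D) $ a $ b" by simp
  qed
  then show "D = (1/2::real) *\<^sub>R (((2::real) *\<^sub>R D) ** proj \<phi> + proj \<phi> ** ((2::real) *\<^sub>R D))"
    by (simp add: scaleR_mm_left scaleR_mm_right flip: scaleR_add_right)
qed



lemma norm_unit: "norm (\<psi>::complex^'n::finite) = 1 \<Longrightarrow> (\<Sum>a\<in>UNIV. (cmod (\<psi> $ a))^2) = 1"
  by (simp add: norm_vec_def L2_set_def)

lemma qfi_pure:
  fixes Z :: "'n::finite \<Rightarrow> complex^'n^'n"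
  assumes herm: "\<And>j. hermitian (Z j)" and diag: "\<And>j. diagonal_op (Z j)"
    and unit: "norm \<psi> = 1"
  shows "qfi_mean (\<lambda>\<theta>'. Ugen Z \<theta>' ** proj \<psi> ** cadj (Ugen Z \<theta>')) \<theta> =
     (1 / real CARD('n)) * (\<Sum>j\<in>UNIV. 4 * (\<Sum>a\<in>UNIV. (cmod (\<psi> $ a))^2 * (zr Z j a - (\<Sum>b\<in>UNIV. (cmod (\<psi> $ b))^2 * zr Z j b))^2))"
proof -
  define P where "P = (\<lambda>\<theta>'. proj (psi' Z \<psi> \<theta>'))"
  have f: "(\<lambda>\<theta>'. Ugen Z \<theta>' ** proj \<psi> ** cadj (Ugen Z \<theta>')) = P"
    unfolding P_def by (simp add: Ugen_dg[OF herm diag] conj_proj psi'_def)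
  have cm: "cmod (psi' Z \<psi> \<theta> $ a) = cmod (\<psi> $ a)" for a
    by (simp add: psi'_def norm_mult)
  have unit': "(\<Sum>a\<in>UNIV. (cmod (psi' Z \<psi> \<theta> $ a))^2) = 1"
    unfolding cm using norm_unit[OF unit] .
  define D where "D = (\<lambda>j. (\<chi> a b. \<i> * complex_of_real (zr Z j a - zr Z j b) * proj (psi' Z \<psi> \<theta>) $ a $ b))"
  have dp: "dpart P \<theta> j = D j" for j unfolding P_def D_def by (rule dpart_eq)
  have ex: "\<exists>L. \<forall>j. hermitian (L j) \<and> dpart P \<theta> j = (1/2 :: real) *\<^sub>R (L j ** P \<theta> + P \<theta> ** L j)"
  proof (intro exI allI)
    fix j
    show "hermitian ((\<lambda>j. (2::real) *\<^sub>R D j) j) \<and> dpart P \<theta> j = (1/2 :: real) *\<^sub>R ((\<lambda>j. (2::real) *\<^sub>R D j) j ** P \<theta> + P \<theta> ** (\<lambda>j. (2::real) *\<^sub>R D j) j)"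
      using sld_exists[OF unit', of "zr Z j"] dp[of j] unfolding P_def D_def by simp
  qed
  define L where "L = (SOME L. \<forall>j. hermitian (L j) \<and> dpart P \<theta> j = (1/2 :: real) *\<^sub>R (L j ** P \<theta> + P \<theta> ** L j))"
  have Lp: "hermitian (L j) \<and> dpart P \<theta> j = (1/2 :: real) *\<^sub>R (L j ** P \<theta> + P \<theta> ** L j)" for j
    using someI_ex[OF ex] unfolding L_def by blast
  have q: "qfi_matrix P \<theta> j j = 4 * (\<Sum>a\<in>UNIV. (cmod (\<psi> $ a))^2 * (zr Z j a - (\<Sum>b\<in>UNIV. (cmod (\<psi> $ b))^2 * zr Z j b))^2)" for j
  proof -
    have "qfi_matrix P \<theta> j j = Re (trace (L j ** L j ** P \<theta>))"
      unfolding qfi_matrix_def L_def Let_def ..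
    also have "\<dots> = 4 * (\<Sum>a\<in>UNIV. (cmod (psi' Z \<psi> \<theta> $ a))^2 * (zr Z j a - (\<Sum>b\<in>UNIV. (cmod (psi' Z \<psi> \<theta> $ b))^2 * zr Z j b))^2)"
      unfolding P_def
    proof (rule sld_value[OF unit'])
      show "hermitian (L j)" using Lp by blast
      show "(\<chi> a b. \<i> * complex_of_real (zr Z j a - zr Z j b) * proj (psi' Z \<psi> \<theta>) $ a $ b) =
          (1/2::real) *\<^sub>R (L j ** proj (psi' Z \<psi> \<theta>) + proj (psi' Z \<psi> \<theta>) ** L j)"
        using Lp[of j] dp[of j] unfolding D_def P_def by simp
    qed
    finally show ?thesis unfolding cm .
  qed
  show ?thesis unfolding f qfi_mean_def q ..
qed



lemma row_orth:
  fixes Z :: "'n::finite \<Rightarrow> complex^'n^'n"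
  assumes herm: "\<And>j. hermitian (Z j)" and diag: "\<And>j. diagonal_op (Z j)"
    and orth: "\<And>j k. trace (Z j ** Z k) = (if j = k then 1 else 0)"
  shows "(\<Sum>a\<in>UNIV. zr Z j a * zr Z k a) = (if j = k then 1 else 0)"
proof -
  have "trace (Z j ** Z k) = (\<Sum>a\<in>UNIV. \<Sum>c\<in>UNIV. Z j $ a $ c * Z k $ c $ a)"
    by (simp add: trace_def mm_comp)
  also have "\<dots> = (\<Sum>a\<in>UNIV. Z j $ a $ a * Z k $ a $ a)"
  proof (rule sum.cong[OF refl])
    fix a
    have "(\<Sum>c\<in>UNIV. Z j $ a $ c * Z k $ c $ a) = (\<Sum>c\<in>UNIV. if c = a then Z j $ a $ c * Z k $ c $ a else 0)"
      by (rule sum.cong) (use diag in \<open>auto simp: diagonal_op_def\<close>)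
    then show "(\<Sum>c\<in>UNIV. Z j $ a $ c * Z k $ c $ a) = Z j $ a $ a * Z k $ a $ a" by simp
  qed
  also have "\<dots> = complex_of_real (\<Sum>a\<in>UNIV. zr Z j a * zr Z k a)"
    unfolding of_real_sum of_real_mult zr_def using herm_diag_real[OF herm] by simp
  finally have c: "complex_of_real (\<Sum>a\<in>UNIV. zr Z j a * zr Z k a) = (if j = k then 1 else 0)"
    using orth[of j k] by metis
  show ?thesis
  proof (cases "j = k")
    case True then show ?thesis using c by (metis of_real_eq_1_iff)
  next
    case False then show ?thesis using c by (metis of_real_eq_0_iff)
  qed
qed

lemma col_orth:
  fixes Z :: "'n::finite \<Rightarrow> complex^'n^'n"
  assumes herm: "\<And>j. hermitian (Z j)" and diag: "\<And>j. diagonal_op (Z j)"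
    and orth: "\<And>j k. trace (Z j ** Z k) = (if j = k then 1 else 0)"
  shows "(\<Sum>j\<in>UNIV. zr Z j a * zr Z j b) = (if a = b then 1 else 0)"
proof -
  define Om where "Om = ((\<chi> j a. zr Z j a) :: real^'n^'n)"
  have "Om ** transpose Om = mat 1"
    by (simp add: vec_eq_iff mm_comp Om_def transpose_def mat_def row_orth[OF herm diag orth])
  then have "transpose Om ** Om = mat 1" by (simp add: matrix_left_right_inverse)
  then have "(transpose Om ** Om) $ a $ b = mat 1 $ a $ b" by simp
  then show ?thesis by (simp add: mm_comp Om_def transpose_def mat_def)
qed

lemma qfi_formula:
  fixes Z :: "'n::finite \<Rightarrow> complex^'n^'n" and q :: "'n \<Rightarrow> real"
  assumes herm: "\<And>j. hermitian (Z j)" and diag: "\<And>j. diagonal_op (Z j)"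
    and orth: "\<And>j k. trace (Z j ** Z k) = (if j = k then 1 else 0)"
    and q1: "(\<Sum>a\<in>UNIV. q a) = 1"
  shows "(\<Sum>j\<in>UNIV. 4 * (\<Sum>a\<in>UNIV. q a * (zr Z j a - (\<Sum>b\<in>UNIV. q b * zr Z j b))^2))
     = 4 * (1 - (\<Sum>a\<in>UNIV. (q a)^2))"
proof -
  define m where "m j = (\<Sum>b\<in>UNIV. q b * zr Z j b)" for j
  have v: "(\<Sum>a\<in>UNIV. q a * (zr Z j a - m j)^2) = (\<Sum>a\<in>UNIV. q a * (zr Z j a)^2) - (m j)^2" for j
  proof -
    have "(\<Sum>a\<in>UNIV. q a * (zr Z j a - m j)^2) = (\<Sum>a\<in>UNIV. q a * (zr Z j a)^2 - 2 * m j * (q a * zr Z j a) + (m j)^2 * q a)"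
      by (rule sum.cong) (auto simp: power2_eq_square algebra_simps)
    also have "\<dots> = (\<Sum>a\<in>UNIV. q a * (zr Z j a)^2) - 2 * m j * m j + (m j)^2 * 1"
      by (simp add: sum.distrib sum_subtractf m_def q1 flip: sum_distrib_left)
    finally show ?thesis by (simp add: power2_eq_square)
  qed
  have s1: "(\<Sum>j\<in>UNIV. \<Sum>a\<in>UNIV. q a * (zr Z j a)^2) = 1"
  proof -
    have "(\<Sum>j\<in>UNIV. \<Sum>a\<in>UNIV. q a * (zr Z j a)^2) = (\<Sum>a\<in>UNIV. q a * (\<Sum>j\<in>UNIV. zr Z j a * zr Z j a))"
      by (subst sum.swap) (simp add: sum_distrib_left power2_eq_square)
    also have "\<dots> = 1" using q1 by (simp add: col_orth[OF herm diag orth])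
    finally show ?thesis .
  qed
  have s2: "(\<Sum>j\<in>UNIV. (m j)^2) = (\<Sum>a\<in>UNIV. (q a)^2)"
  proof -
    have "(\<Sum>j\<in>UNIV. (m j)^2) = (\<Sum>j\<in>UNIV. \<Sum>a\<in>UNIV. \<Sum>b\<in>UNIV. q a * q b * (zr Z j a * zr Z j b))"
      by (simp add: m_def power2_eq_square sum_product algebra_simps)
    also have "\<dots> = (\<Sum>a\<in>UNIV. \<Sum>j\<in>UNIV. \<Sum>b\<in>UNIV. q a * q b * (zr Z j a * zr Z j b))"
      by (rule sum.swap)
    also have "\<dots> = (\<Sum>a\<in>UNIV. \<Sum>b\<in>UNIV. \<Sum>j\<in>UNIV. q a * q b * (zr Z j a * zr Z j b))"
      by (rule sum.cong[OF refl], rule sum.swap)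
    also have "\<dots> = (\<Sum>a\<in>UNIV. \<Sum>b\<in>UNIV. q a * q b * (\<Sum>j\<in>UNIV. zr Z j a * zr Z j b))"
      by (simp only: sum_distrib_left)
    also have "\<dots> = (\<Sum>a\<in>UNIV. (q a)^2)"
      by (simp add: col_orth[OF herm diag orth] power2_eq_square if_distrib cong: if_cong)
    finally show ?thesis .
  qed
  have "(\<Sum>j\<in>UNIV. 4 * (\<Sum>a\<in>UNIV. q a * (zr Z j a - m j)^2)) = 4 * ((\<Sum>j\<in>UNIV. \<Sum>a\<in>UNIV. q a * (zr Z j a)^2) - (\<Sum>j\<in>UNIV. (m j)^2))"
    by (simp add: v sum_subtractf flip: sum_distrib_left)
  then have "(\<Sum>j\<in>UNIV. 4 * (\<Sum>a\<in>UNIV. q a * (zr Z j a - m j)^2)) = 4 * (1 - (\<Sum>a\<in>UNIV. (q a)^2))"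
    unfolding s1 s2 .
  then show ?thesis by (simp only: m_def)
qed

lemma sq_bounds:
  fixes q :: "'n::finite \<Rightarrow> real"
  assumes q0: "\<And>a. q a \<ge> 0" and q1: "(\<Sum>a\<in>UNIV. q a) = 1"
  shows "(\<Sum>a\<in>UNIV. (q a)^2) \<le> 1" "1 / real CARD('n) \<le> (\<Sum>a\<in>UNIV. (q a)^2)"
proof -
  have "q a \<le> 1" for a
    using member_le_sum[of a UNIV q] q0 q1 by simp
  then have "(q a)^2 \<le> q a" for a using q0[of a] by (simp add: power2_eq_square mult_left_le)
  then have "(\<Sum>a\<in>UNIV. (q a)^2) \<le> (\<Sum>a\<in>UNIV. q a)" by (rule sum_mono)
  then show "(\<Sum>a\<in>UNIV. (q a)^2) \<le> 1" using q1 by simp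
  define n where "n = real CARD('n)"
  have n0: "n > 0" unfolding n_def by simp
  have "0 \<le> (\<Sum>a\<in>UNIV. (q a - 1/n)^2)" by (simp add: sum_nonneg)
  also have "\<dots> = (\<Sum>a\<in>UNIV. (q a)^2 - 2/n * q a + 1/n^2)"
    by (rule sum.cong) (auto simp: power2_eq_square algebra_simps)
  also have "\<dots> = (\<Sum>a\<in>UNIV. (q a)^2) - 2/n * (\<Sum>a\<in>UNIV. q a) + real (card (UNIV::'n set)) * (1/n^2)"
    by (simp only: sum.distrib sum_subtractf sum_distrib_left[symmetric] sum_constant)
  also have "\<dots> = (\<Sum>a\<in>UNIV. (q a)^2) - 2/n + n / n^2"
    by (simp add: q1 n_def)
  also have "\<dots> = (\<Sum>a\<in>UNIV. (q a)^2) - 1/n"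
    using n0 by (simp add: power2_eq_square)
  finally show "1 / real CARD('n) \<le> (\<Sum>a\<in>UNIV. (q a)^2)" unfolding n_def by simp
qed



lemma qfi_val:
  fixes Z :: "'n::finite \<Rightarrow> complex^'n^'n"
  assumes herm: "\<And>j. hermitian (Z j)" and diag: "\<And>j. diagonal_op (Z j)"
    and orth: "\<And>j k. trace (Z j ** Z k) = (if j = k then 1 else 0)"
    and unit: "norm \<psi> = 1"
  shows "qfi_mean (\<lambda>\<theta>'. Ugen Z \<theta>' ** proj \<psi> ** cadj (Ugen Z \<theta>')) \<theta> =
     (1 / real CARD('n)) * (4 * (1 - (\<Sum>a\<in>UNIV. ((cmod (\<psi> $ a))^2)^2)))"
  unfolding qfi_pure[OF herm diag unit]
  using qfi_formula[OF herm diag orth norm_unit[OF unit]] by simp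

lemma qfi_bounds:
  fixes Z :: "'n::finite \<Rightarrow> complex^'n^'n"
  assumes herm: "\<And>j. hermitian (Z j)" and diag: "\<And>j. diagonal_op (Z j)"
    and orth: "\<And>j k. trace (Z j ** Z k) = (if j = k then 1 else 0)"
    and unit: "norm \<psi> = 1"
  shows "0 \<le> qfi_mean (\<lambda>\<theta>'. Ugen Z \<theta>' ** proj \<psi> ** cadj (Ugen Z \<theta>')) \<theta>"
    "qfi_mean (\<lambda>\<theta>'. Ugen Z \<theta>' ** proj \<psi> ** cadj (Ugen Z \<theta>')) \<theta> \<le> 4 * (real CARD('n) - 1) / (real CARD('n))^2"
proof -
  define s where "s = (\<Sum>a\<in>UNIV. ((cmod (\<psi> $ a))^2)^2)"
  define n where "n = real CARD('n)"
  have n0: "n > 0" unfolding n_def by simp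
  have b: "s \<le> 1" "1 / n \<le> s"
    using sq_bounds[of "\<lambda>a. (cmod (\<psi> $ a))^2", OF _ norm_unit[OF unit]] unfolding s_def n_def by auto
  have v: "qfi_mean (\<lambda>\<theta>'. Ugen Z \<theta>' ** proj \<psi> ** cadj (Ugen Z \<theta>')) \<theta> = (1 / n) * (4 * (1 - s))"
    unfolding qfi_val[OF herm diag orth unit] s_def n_def ..
  show "0 \<le> qfi_mean (\<lambda>\<theta>'. Ugen Z \<theta>' ** proj \<psi> ** cadj (Ugen Z \<theta>')) \<theta>"
    unfolding v using b n0 by simp
  have "(1 / n) * (4 * (1 - s)) \<le> (1 / n) * (4 * (1 - 1 / n))"
    using b n0 by (intro mult_left_mono) auto
  also have "\<dots> = 4 * (n - 1) / n^2" using n0 by (simp add: field_simps power2_eq_square)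
  finally show "qfi_mean (\<lambda>\<theta>'. Ugen Z \<theta>' ** proj \<psi> ** cadj (Ugen Z \<theta>')) \<theta> \<le> 4 * (real CARD('n) - 1) / (real CARD('n))^2"
    unfolding v n_def .
qed



definition qf :: "complex^'n::finite^'n \<Rightarrow> complex^'n \<Rightarrow> complex" where
  "qf A v = (\<Sum>i\<in>UNIV. \<Sum>j\<in>UNIV. cnj (v $ i) * A $ i $ j * v $ j)"

lemma psd_qf: "psd A \<longleftrightarrow> (\<forall>v. Im (qf A v) = 0 \<and> Re (qf A v) \<ge> 0)"
  by (simp add: psd_def qf_def Let_def)

lemma qf_diff: "qf (A - B) v = qf A v - qf B v"
  by (simp add: qf_def algebra_simps sum_subtractf)

lemma qf_proj: "qf (proj w) v = (\<Sum>i\<in>UNIV. cnj (v $ i) * w $ i) * (\<Sum>j\<in>UNIV. cnj (w $ j) * v $ j)"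
  unfolding qf_def proj_def sum_product vec_lambda_beta
  by (intro sum.cong refl) (simp add: algebra_simps)

lemma sum_if_const: "(\<Sum>j\<in>A. if P then f j else 0) = (if P then (\<Sum>j\<in>A. f j) else 0)"
  by simp

lemma qf_shift:
  fixes A :: "complex^'n::finite^'n"
  shows "qf A (\<chi> i. v $ i - s * (if i = k then 1 else 0)) =
    qf A v - cnj s * (\<Sum>j\<in>UNIV. A $ k $ j * v $ j) - s * (\<Sum>i\<in>UNIV. cnj (v $ i) * A $ i $ k) + cnj s * s * A $ k $ k"
proof -
  have e: "cnj (v $ i - s * (if i = k then 1 else 0)) * A $ i $ j * (v $ j - s * (if j = k then 1 else 0)) =
     cnj (v $ i) * A $ i $ j * v $ j - (if i = k then cnj s * A $ k $ j * v $ j else 0)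
     - (if j = k then s * (cnj (v $ i) * A $ i $ k) else 0)
     + (if i = k then (if j = k then cnj s * s * A $ k $ k else 0) else 0)" for i j
    by (auto simp: algebra_simps)
  show ?thesis
    unfolding qf_def vec_lambda_beta e
    by (simp add: sum.distrib sum_subtractf sum_distrib_left sum_if_const mult.assoc)
qed

lemma herm_entry: "hermitian A \<Longrightarrow> A $ a $ b = cnj (A $ b $ a)"
proof -
  assume "hermitian A"
  then have "cadj A $ a $ b = A $ a $ b" by (simp add: hermitian_def)
  then show ?thesis by (simp add: cadj_def)
qed

lemma herm_conj_sum: "hermitian A \<Longrightarrow> (\<Sum>i\<in>UNIV. cnj (v $ i) * A $ i $ k) = cnj (\<Sum>j\<in>UNIV. A $ k $ j * v $ j)"
  by (simp add: herm_entry[of A _ k] mult.commute)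



lemma row_zero:
  fixes \<rho> :: "complex^'n::finite^'n"
  assumes herm: "hermitian \<rho>" and psd: "psd \<rho>" and kk: "\<rho> $ k $ k = 0"
  shows "\<rho> $ k $ j = 0"
proof -
  define v where "v = (axis j 1 :: complex^'n)"
  define c where "c = (\<Sum>i\<in>UNIV. \<rho> $ k $ i * v $ i)"
  have c_eq: "c = \<rho> $ k $ j"
  proof -
    have "c = (\<Sum>i\<in>UNIV. if i = j then \<rho> $ k $ i else 0)"
      unfolding c_def v_def by (rule sum.cong) (auto simp: axis_def)
    then show ?thesis by simp
  qed
  have key: "Re (qf \<rho> (\<chi> i. v $ i - (complex_of_real t * c) * (if i = k then 1 else 0))) = Re (qf \<rho> v) - 2 * t * (cmod c)^2" for t
  proof -
    have cc: "cnj c * c = complex_of_real ((cmod c)^2)" by (rule cmod_sq_c[symmetric])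
    have "qf \<rho> (\<chi> i. v $ i - (complex_of_real t * c) * (if i = k then 1 else 0)) =
       qf \<rho> v - complex_of_real t * (cnj c * c) - complex_of_real t * (cnj c * c)"
      unfolding qf_shift herm_conj_sum[OF herm] c_def[symmetric] kk by (simp add: algebra_simps)
    then show ?thesis unfolding cc by simp
  qed
  show ?thesis
  proof (rule ccontr)
    assume "\<rho> $ k $ j \<noteq> 0"
    then have cpos: "(cmod c)^2 > 0" using c_eq by simp
    define t where "t = (Re (qf \<rho> v) + 1) / (2 * (cmod c)^2)"
    have "Re (qf \<rho> (\<chi> i. v $ i - (complex_of_real t * c) * (if i = k then 1 else 0))) \<ge> 0"
      using psd unfolding psd_qf by blast
    moreover have "Re (qf \<rho> v) - 2 * t * (cmod c)^2 = -1"
      using cpos unfolding t_def by (simp add: field_simps)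
    ultimately show False using key[of t] by simp
  qed
qed



lemma qf_axis: "qf A (axis k 1) = A $ k $ k"
proof -
  have "qf A (axis k 1) = (\<Sum>i\<in>UNIV. \<Sum>j\<in>UNIV. if i = k then (if j = k then A $ k $ k else 0) else 0)"
    unfolding qf_def by (intro sum.cong refl) (auto simp: axis_def)
  then show ?thesis by (simp add: sum_if_const)
qed

lemma schur_step:
  fixes \<rho> :: "complex^'n::finite^'n"
  assumes herm: "hermitian \<rho>" and psd: "psd \<rho>" and kk: "\<rho> $ k $ k \<noteq> 0"
  defines "r \<equiv> Re (\<rho> $ k $ k)"
  defines "w \<equiv> (\<chi> i. \<rho> $ i $ k / complex_of_real (sqrt r))"
  shows "hermitian (\<rho> - proj w)" "psd (\<rho> - proj w)" "\<And>j. (\<rho> - proj w) $ k $ j = 0"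
    "\<And>i j. (\<forall>j. \<rho> $ i $ j = 0) \<Longrightarrow> (\<rho> - proj w) $ i $ j = 0"
proof -
  have H: "cnj (\<rho> $ j $ i) = \<rho> $ i $ j" for i j using herm_entry[OF herm, of i j] by simp
  have rk: "\<rho> $ k $ k = complex_of_real r" unfolding r_def by (rule herm_diag_real[OF herm])
  have "r \<ge> 0" using psd unfolding psd_qf r_def by (metis qf_axis)
  moreover have "r \<noteq> 0" using kk rk by auto
  ultimately have rpos: "r > 0" by simp
  have sq: "complex_of_real (sqrt r) * complex_of_real (sqrt r) = complex_of_real r"
    using rpos by (simp flip: of_real_mult)
  have sq0: "complex_of_real (sqrt r) \<noteq> 0" using rpos by simp
  show "hermitian (\<rho> - proj w)"
    unfolding hermitian_def cadj_def vec_eq_iff by (simp add: proj_def H)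
  show "psd (\<rho> - proj w)"
    unfolding psd_qf
  proof
    fix v :: "complex^'n"
    define c where "c = (\<Sum>j\<in>UNIV. \<rho> $ k $ j * v $ j)"
    have s1: "(\<Sum>j\<in>UNIV. cnj (w $ j) * v $ j) = c / complex_of_real (sqrt r)"
      unfolding c_def w_def by (simp add: H sum_divide_distrib)
    have s2: "(\<Sum>i\<in>UNIV. cnj (v $ i) * w $ i) = cnj c / complex_of_real (sqrt r)"
    proof -
      have "(\<Sum>i\<in>UNIV. cnj (v $ i) * w $ i) = (\<Sum>i\<in>UNIV. cnj (v $ i) * \<rho> $ i $ k) / complex_of_real (sqrt r)"
        unfolding w_def by (simp add: sum_divide_distrib)
      then show ?thesis unfolding herm_conj_sum[OF herm] c_def .
    qed
    have "qf (\<rho> - proj w) v = qf \<rho> v - cnj c * c / complex_of_real r"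
      unfolding qf_diff qf_proj s1 s2 using sq sq0 by (simp add: field_simps)
    also have "\<dots> = qf \<rho> (\<chi> i. v $ i - (c / complex_of_real r) * (if i = k then 1 else 0))"
      unfolding qf_shift herm_conj_sum[OF herm] c_def[symmetric] rk using rpos
      by (simp add: field_simps)
    finally have "qf (\<rho> - proj w) v = qf \<rho> (\<chi> i. v $ i - (c / complex_of_real r) * (if i = k then 1 else 0))" .
    then show "Im (qf (\<rho> - proj w) v) = 0 \<and> 0 \<le> Re (qf (\<rho> - proj w) v)"
      using psd unfolding psd_qf by simp
  qed
  show "(\<rho> - proj w) $ k $ j = 0" for j
    unfolding w_def proj_def using sq sq0 by (simp add: H rk field_simps)
  show "(\<rho> - proj w) $ i $ j = 0" if "\<forall>j. \<rho> $ i $ j = 0" for i j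
    unfolding w_def proj_def using that by simp
qed



lemma gram_aux:
  fixes S :: "'n::finite set"
  shows "finite S \<Longrightarrow> \<forall>\<rho>::complex^'n^'n. hermitian \<rho> \<and> psd \<rho> \<and> (\<forall>i j. i \<notin> S \<longrightarrow> \<rho> $ i $ j = 0)
      \<longrightarrow> (\<exists>(m::nat) W. \<rho> = (\<Sum>l<m. proj (W l)))"
proof (induct S rule: finite_induct)
  case empty
  show ?case
  proof (intro allI impI)
    fix \<rho> :: "complex^'n^'n"
    assume "hermitian \<rho> \<and> psd \<rho> \<and> (\<forall>i j. i \<notin> {} \<longrightarrow> \<rho> $ i $ j = 0)"
    then have "\<rho> = (\<Sum>l<(0::nat). proj (W l))" for W by (simp add: vec_eq_iff)
    then show "\<exists>(m::nat) W. \<rho> = (\<Sum>l<m. proj (W l))" by blast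
  qed
next
  case (insert k S)
  show ?case
  proof (intro allI impI)
    fix \<rho> :: "complex^'n^'n"
    assume a: "hermitian \<rho> \<and> psd \<rho> \<and> (\<forall>i j. i \<notin> insert k S \<longrightarrow> \<rho> $ i $ j = 0)"
    then have herm: "hermitian \<rho>" and psd: "psd \<rho>" and z: "\<And>i j. i \<notin> insert k S \<Longrightarrow> \<rho> $ i $ j = 0" by auto
    show "\<exists>(m::nat) W. \<rho> = (\<Sum>l<m. proj (W l))"
    proof (cases "\<rho> $ k $ k = 0")
      case True
      have "\<forall>i j. i \<notin> S \<longrightarrow> \<rho> $ i $ j = 0"
      proof (intro allI impI)
        fix i j assume "i \<notin> S"
        then show "\<rho> $ i $ j = 0"
          using row_zero[OF herm psd True, of j] z[of i j] by (cases "i = k") auto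
      qed
      then show ?thesis using insert.hyps(3) herm psd by blast
    next
      case False
      define r where "r = Re (\<rho> $ k $ k)"
      define w where "w = (\<chi> i. \<rho> $ i $ k / complex_of_real (sqrt r))"
      note st = schur_step[OF herm psd False, folded r_def, folded w_def]
      have "\<forall>i j. i \<notin> S \<longrightarrow> (\<rho> - proj w) $ i $ j = 0"
      proof (intro allI impI)
        fix i j assume "i \<notin> S"
        show "(\<rho> - proj w) $ i $ j = 0"
        proof (cases "i = k")
          case True then show ?thesis using st(3) by simp
        next
          case False then show ?thesis using st(4) z \<open>i \<notin> S\<close> by auto
        qed
      qed
      then obtain m :: nat and W where mW: "\<rho> - proj w = (\<Sum>l<m. proj (W l))"
        using insert.hyps(3) st(1,2) by blast
      have "(\<Sum>l<Suc m. proj ((W(m := w)) l)) = (\<Sum>l<m. proj (W l)) + proj w"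
        by (simp add: sum.lessThan_Suc)
      then have "\<rho> = (\<Sum>l<Suc m. proj ((W(m := w)) l))" using mW by (simp add: algebra_simps)
      then show ?thesis by blast
    qed
  qed
qed

lemma gram:
  fixes \<rho> :: "complex^'n::finite^'n"
  assumes "hermitian \<rho>" "psd \<rho>"
  shows "\<exists>(m::nat) W. \<rho> = (\<Sum>l<m. proj (W l))"
proof -
  have "\<forall>\<rho>::complex^'n^'n. hermitian \<rho> \<and> psd \<rho> \<longrightarrow> (\<exists>(m::nat) W. \<rho> = (\<Sum>l<m. proj (W l)))"
    using gram_aux[of "UNIV :: 'n set"] by simp
  then show ?thesis using assms by blast
qed

lemma norm_sq_vec: "(norm (x::complex^'n::finite))^2 = (\<Sum>i\<in>UNIV. (cmod (x $ i))^2)"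
  by (simp add: norm_vec_def L2_set_def sum_nonneg)

lemma trace_proj: "trace (proj (w::complex^'n::finite)) = complex_of_real ((norm w)^2)"
  unfolding norm_sq_vec trace_def proj_def of_real_sum vec_lambda_beta cmod_sq_c
  by (simp add: mult.commute)

lemma trace_sum: "trace (\<Sum>l<m. (M l :: complex^'n::finite^'n)) = (\<Sum>l<m. trace (M l))"
  unfolding trace_def by (simp add: sum_component) (rule sum.swap)

lemma proj_scale: "proj ((c::real) *\<^sub>R w) = (c * c) *\<^sub>R proj w"
  by (simp add: proj_def vec_eq_iff)

lemma norm_axis_c: "norm (axis i (1::complex) :: complex^'n::finite) = 1"
proof -
  have "(norm (axis i (1::complex) :: complex^'n))^2 = 1"
  proof -
    have "(\<Sum>j\<in>UNIV. (cmod ((axis i (1::complex) :: complex^'n) $ j))^2) = (\<Sum>j\<in>UNIV. if j = i then 1 else 0)"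
      by (rule sum.cong) (auto simp: axis_def)
    then show ?thesis unfolding norm_sq_vec by simp
  qed
  then show ?thesis by (simp add: power2_eq_1_iff)
qed

lemma ensemble_exists:
  fixes \<rho> :: "complex^'n::finite^'n"
  assumes "density \<rho>"
  shows "\<exists>m p \<psi>. ensemble \<rho> m p \<psi>"
proof -
  have herm: "hermitian \<rho>" and psd: "psd \<rho>" and tr: "trace \<rho> = 1" using assms by (auto simp: density_def)
  obtain m :: nat and W where W: "\<rho> = (\<Sum>l<m. proj (W l))" using gram[OF herm psd] by blast
  define p where "p l = (norm (W l))^2" for l
  define \<psi> where "\<psi> l = (if W l = 0 then axis undefined 1 else (1 / norm (W l)) *\<^sub>R W l)" for l
  have n1: "norm (\<psi> l) = 1" for l
    by (simp add: \<psi>_def norm_axis_c)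
  have pp: "p l *\<^sub>R proj (\<psi> l) = proj (W l)" for l
  proof (cases "W l = 0")
    case True then show ?thesis by (simp add: p_def \<psi>_def proj_def vec_eq_iff)
  next
    case False then show ?thesis by (simp add: p_def \<psi>_def proj_scale power2_eq_square)
  qed
  have "complex_of_real (\<Sum>l<m. p l) = 1"
    using tr unfolding W trace_sum trace_proj p_def of_real_sum .
  then have "(\<Sum>l<m. p l) = 1" by (metis of_real_eq_1_iff)
  moreover have "\<rho> = (\<Sum>l<m. p l *\<^sub>R proj (\<psi> l))" unfolding pp by (rule W)
  ultimately have "ensemble \<rho> m p \<psi>" unfolding ensemble_def using n1 by (simp add: p_def)
  then show ?thesis by blast
qed



lemma qf_sum: "qf (\<Sum>l<m. M l) v = (\<Sum>l<m. qf (M l) v)"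
proof -
  have "qf (\<Sum>l<m. M l) v = (\<Sum>i\<in>UNIV. \<Sum>j\<in>UNIV. \<Sum>l<m. cnj (v $ i) * M l $ i $ j * v $ j)"
    unfolding qf_def sum_component by (simp only: sum_distrib_left sum_distrib_right)
  also have "\<dots> = (\<Sum>i\<in>UNIV. \<Sum>l<m. \<Sum>j\<in>UNIV. cnj (v $ i) * M l $ i $ j * v $ j)"
    by (rule sum.cong[OF refl], rule sum.swap)
  also have "\<dots> = (\<Sum>l<m. \<Sum>i\<in>UNIV. \<Sum>j\<in>UNIV. cnj (v $ i) * M l $ i $ j * v $ j)"
    by (rule sum.swap)
  finally show ?thesis unfolding qf_def .
qed

lemma qf_scale: "qf ((c::real) *\<^sub>R M) v = complex_of_real c * qf M v"
  unfolding qf_def vector_scaleR_component by (simp add: scaleR_conv_of_real sum_distrib_left algebra_simps)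

lemma unit_c: "norm (x::complex^'n::finite) = 1 \<Longrightarrow> (\<Sum>a\<in>UNIV. cnj (x $ a) * x $ a) = 1"
proof -
  assume "norm x = 1"
  then have "(\<Sum>a\<in>UNIV. (cmod (x $ a))^2) = 1" by (rule norm_unit)
  then have "complex_of_real (\<Sum>a\<in>UNIV. (cmod (x $ a))^2) = 1" by simp
  then show ?thesis unfolding of_real_sum cmod_sq_c .
qed

lemma dist_ident:
  fixes x y :: "complex^'n::finite"
  assumes x: "norm x = 1" and y: "norm y = 1"
  defines "c \<equiv> (\<Sum>a\<in>UNIV. cnj (y $ a) * x $ a)"
  shows "complex_of_real (\<Sum>a\<in>UNIV. (cmod (x $ a - c * y $ a))^2) = 1 - complex_of_real ((cmod c)^2)"
proof -
  have cc: "(\<Sum>a\<in>UNIV. cnj (x $ a) * y $ a) = cnj c"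
    unfolding c_def cnj_sum complex_cnj_mult complex_cnj_cnj by (rule sum.cong[OF refl]) (simp add: mult.commute)
  have "complex_of_real (\<Sum>a\<in>UNIV. (cmod (x $ a - c * y $ a))^2) =
     (\<Sum>a\<in>UNIV. cnj (x $ a) * x $ a - c * (cnj (x $ a) * y $ a) - cnj c * (cnj (y $ a) * x $ a) + cnj c * c * (cnj (y $ a) * y $ a))"
    unfolding of_real_sum cmod_sq_c by (intro sum.cong refl) (simp add: algebra_simps)
  also have "\<dots> = (\<Sum>a\<in>UNIV. cnj (x $ a) * x $ a) - c * (\<Sum>a\<in>UNIV. cnj (x $ a) * y $ a) - cnj c * (\<Sum>a\<in>UNIV. cnj (y $ a) * x $ a) + cnj c * c * (\<Sum>a\<in>UNIV. cnj (y $ a) * y $ a)"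
    by (simp only: sum.distrib sum_subtractf sum_distrib_left)
  also have "\<dots> = 1 - cnj c * c"
    unfolding unit_c[OF x] unit_c[OF y] cc c_def[symmetric] by simp
  finally show ?thesis unfolding cmod_sq_c .
qed

lemma pure_component:
  fixes u :: "complex^'n::finite"
  assumes u: "norm u = 1" and ens: "ensemble (proj u) m p \<psi>" and l: "l < m" and pl: "p l > 0"
  shows "cmod (\<psi> l $ a) = cmod (u $ a)"
proof -
  have p0: "\<And>l. l < m \<Longrightarrow> p l \<ge> 0" and n1: "\<And>l. l < m \<Longrightarrow> norm (\<psi> l) = 1"
    and ps: "(\<Sum>l<m. p l) = 1" and rho: "proj u = (\<Sum>l<m. p l *\<^sub>R proj (\<psi> l))"
    using ens unfolding ensemble_def by auto
  define c where "c l = (\<Sum>a\<in>UNIV. cnj (u $ a) * \<psi> l $ a)" for l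
  have qfp: "qf (proj x) u = complex_of_real ((cmod (\<Sum>a\<in>UNIV. cnj (u $ a) * x $ a))^2)" for x
  proof -
    have "(\<Sum>j\<in>UNIV. cnj (x $ j) * u $ j) = cnj (\<Sum>a\<in>UNIV. cnj (u $ a) * x $ a)" by (simp add: mult.commute)
    then show ?thesis unfolding qf_proj cmod_sq_c by (simp add: mult.commute)
  qed
  have le1: "(cmod (c l'))^2 \<le> 1" if "l' < m" for l'
  proof -
    have "complex_of_real (\<Sum>a\<in>UNIV. (cmod (\<psi> l' $ a - c l' * u $ a))^2) = 1 - complex_of_real ((cmod (c l'))^2)"
      using dist_ident[OF n1[OF that] u] unfolding c_def .
    then have "complex_of_real (\<Sum>a\<in>UNIV. (cmod (\<psi> l' $ a - c l' * u $ a))^2) = complex_of_real (1 - (cmod (c l'))^2)"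
      by (simp only: of_real_diff of_real_1)
    then have "(\<Sum>a\<in>UNIV. (cmod (\<psi> l' $ a - c l' * u $ a))^2) = 1 - (cmod (c l'))^2"
      by (simp only: of_real_eq_iff)
    moreover have "(\<Sum>a\<in>UNIV. (cmod (\<psi> l' $ a - c l' * u $ a))^2) \<ge> 0" by (simp add: sum_nonneg)
    ultimately show ?thesis by simp
  qed
  have A: "qf (proj u) u = 1" unfolding qfp unit_c[OF u] by simp
  have "qf (proj u) u = qf (\<Sum>l<m. p l *\<^sub>R proj (\<psi> l)) u"
    by (rule arg_cong[where f = "\<lambda>M. qf M u"], rule rho)
  also have "\<dots> = (\<Sum>l<m. complex_of_real (p l) * qf (proj (\<psi> l)) u)"
    by (simp only: qf_sum qf_scale)
  also have "\<dots> = (\<Sum>l<m. complex_of_real (p l) * complex_of_real ((cmod (c l))^2))"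
    by (simp only: qfp c_def)
  also have "\<dots> = complex_of_real (\<Sum>l<m. p l * (cmod (c l))^2)"
    by (simp only: of_real_sum of_real_mult)
  finally have B: "qf (proj u) u = complex_of_real (\<Sum>l<m. p l * (cmod (c l))^2)" .
  have "complex_of_real (\<Sum>l<m. p l * (cmod (c l))^2) = 1" using B[symmetric] A by (rule trans)
  then have "(\<Sum>l<m. p l * (cmod (c l))^2) = 1" by (simp only: of_real_eq_1_iff)
  then have Z: "(\<Sum>l<m. p l * (1 - (cmod (c l))^2)) = 0"
    using ps by (simp add: right_diff_distrib sum_subtractf)
  have N: "\<And>l'. l' \<in> {..<m} \<Longrightarrow> 0 \<le> p l' * (1 - (cmod (c l'))^2)" using p0 le1 by simp
  have "\<forall>l'\<in>{..<m}. p l' * (1 - (cmod (c l'))^2) = 0"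
    using sum_nonneg_eq_0_iff[OF finite_lessThan N] Z by simp
  then have "p l = 0 \<or> (cmod (c l))^2 = 1" using l by simp
  then have "(cmod (c l))^2 = 1" using pl by simp
  then have "complex_of_real (\<Sum>a\<in>UNIV. (cmod (\<psi> l $ a - c l * u $ a))^2) = 0"
    using dist_ident[OF n1[OF l] u] unfolding c_def by simp
  then have "(\<Sum>a\<in>UNIV. (cmod (\<psi> l $ a - c l * u $ a))^2) = 0" by (simp only: of_real_eq_0_iff)
  then have "(cmod (\<psi> l $ a - c l * u $ a))^2 = 0"
    using sum_nonneg_eq_0_iff[of UNIV "\<lambda>a. (cmod (\<psi> l $ a - c l * u $ a))^2"] by simp
  then have "\<psi> l $ a = c l * u $ a" by simp
  moreover have "cmod (c l) = 1" using \<open>(cmod (c l))^2 = 1\<close> using norm_ge_zero[of "c l"] by (auto simp: power2_eq_1_iff)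
  ultimately show ?thesis by (simp add: norm_mult)
qed



theorem mainTheorem8:
  fixes Z :: "'n::finite \<Rightarrow> complex^'n^'n"
  assumes herm: "\<And>j. hermitian (Z j)"
    and diag: "\<And>j. diagonal_op (Z j)"
    and orth: "\<And>j k. trace (Z j ** Z k) = (if j = k then 1 else 0)"
  shows "(\<forall>\<rho> \<theta>. density \<rho> \<longrightarrow>
            0 \<le> Cmeas Z \<rho> \<theta> \<and>
            Cmeas Z \<rho> \<theta> \<le> 4 * (real CARD('n) - 1) / (real CARD('n))^2) \<and>
         (\<forall>(\<phi>::'n \<Rightarrow> real) \<theta>.
            Cmeas Z (proj (\<chi> j. cis (\<phi> j) / complex_of_real (sqrt (real CARD('n))))) \<theta>
              = 4 * (real CARD('n) - 1) / (real CARD('n))^2)"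
proof (intro conjI allI impI)
  define mx where "mx = 4 * (real CARD('n) - 1) / (real CARD('n))^2"
  fix \<theta> :: "real^'n"
  define F where "F \<psi> = qfi_mean (\<lambda>\<theta>'. Ugen Z \<theta>' ** proj \<psi> ** cadj (Ugen Z \<theta>')) \<theta>" for \<psi>
  have Fb: "0 \<le> F \<psi> \<and> F \<psi> \<le> mx" if "norm \<psi> = 1" for \<psi>
    using qfi_bounds[OF herm diag orth that, of \<theta>] unfolding F_def mx_def by simp
  have elem: "0 \<le> (\<Sum>l<m. p l * F (\<psi> l)) \<and> (\<Sum>l<m. p l * F (\<psi> l)) \<le> mx" if ens: "ensemble \<rho> m p \<psi>" for \<rho> m p \<psi>
  proof -
    have p0: "\<And>l. l < m \<Longrightarrow> p l \<ge> 0" and n1: "\<And>l. l < m \<Longrightarrow> norm (\<psi> l) = 1"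
      and ps: "(\<Sum>l<m. p l) = 1" using ens unfolding ensemble_def by auto
    have "0 \<le> (\<Sum>l<m. p l * F (\<psi> l))"
      by (rule sum_nonneg) (simp add: p0 Fb n1)
    moreover have "(\<Sum>l<m. p l * F (\<psi> l)) \<le> (\<Sum>l<m. p l * mx)"
      by (rule sum_mono) (simp add: p0 Fb n1 mult_left_mono)
    moreover have "(\<Sum>l<m. p l * mx) = mx" using ps by (simp flip: sum_distrib_right)
    ultimately show ?thesis by simp
  qed
  define S where "S \<rho> = {(\<Sum>l<m. p l * F (\<psi> l)) | m p \<psi>. ensemble \<rho> m p \<psi>}" for \<rho>
  have C: "Cmeas Z \<rho> \<theta> = Inf (S \<rho>)" for \<rho>
    unfolding Cmeas_def S_def F_def ..
  {
    fix \<rho> :: "complex^'n^'n"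
    assume d: "density \<rho>"
    obtain m p \<psi> where e: "ensemble \<rho> m p \<psi>" using ensemble_exists[OF d] by blast
    have mem: "(\<Sum>l<m. p l * F (\<psi> l)) \<in> S \<rho>" unfolding S_def using e by blast
    have lb: "\<And>x. x \<in> S \<rho> \<Longrightarrow> 0 \<le> x" unfolding S_def using elem by blast
    have "0 \<le> Inf (S \<rho>)" using mem lb by (intro cInf_greatest) auto
    moreover have "Inf (S \<rho>) \<le> mx"
    proof -
      have "bdd_below (S \<rho>)" using lb by (intro bdd_belowI) auto
      then have "Inf (S \<rho>) \<le> (\<Sum>l<m. p l * F (\<psi> l))" using mem by (rule cInf_lower[rotated])
      also have "\<dots> \<le> mx" using elem[OF e] by simp
      finally show ?thesis .
    qed
    ultimately have "0 \<le> Cmeas Z \<rho> \<theta> \<and> Cmeas Z \<rho> \<theta> \<le> mx" unfolding C by simp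
  }
  note part1 = this
  fix \<rho> :: "complex^'n^'n" assume "density \<rho>"
  then show "0 \<le> Cmeas Z \<rho> \<theta>" "Cmeas Z \<rho> \<theta> \<le> 4 * (real CARD('n) - 1) / (real CARD('n))^2"
    using part1 unfolding mx_def by auto
next
  fix \<phi> :: "'n \<Rightarrow> real" and \<theta> :: "real^'n"
  define mx where "mx = 4 * (real CARD('n) - 1) / (real CARD('n))^2"
  define n where "n = real CARD('n)"
  have n0: "n > 0" unfolding n_def by simp
  define u where "u = (\<chi> j. cis (\<phi> j) / complex_of_real (sqrt (real CARD('n))))"
  define F where "F \<psi> = qfi_mean (\<lambda>\<theta>'. Ugen Z \<theta>' ** proj \<psi> ** cadj (Ugen Z \<theta>')) \<theta>" for \<psi>
  have cu: "(cmod (u $ a))^2 = 1 / n" for a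
    unfolding u_def n_def by (simp add: norm_divide power_divide)
  have un: "norm u = 1"
  proof -
    have "(norm u)^2 = 1" unfolding norm_sq_vec cu using n0 by (simp add: n_def)
    then show ?thesis using norm_ge_zero[of u] by (auto simp: power2_eq_1_iff)
  qed
  have Fu: "F u = mx"
  proof -
    have "F u = (1 / n) * (4 * (1 - (\<Sum>a\<in>UNIV. ((cmod (u $ a))^2)^2)))"
      unfolding F_def n_def by (rule qfi_val[OF herm diag orth un])
    also have "\<dots> = (1 / n) * (4 * (1 - n * (1/n)^2))" unfolding cu by (simp add: n_def)
    also have "\<dots> = mx" unfolding mx_def n_def[symmetric] using n0 by (simp add: field_simps power2_eq_square)
    finally show ?thesis .
  qed
  have eqF: "F (\<psi> l) = F u" if ens: "ensemble (proj u) m p \<psi>" "l < m" "p l > 0" for m p \<psi> l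
  proof -
    have n1: "norm (\<psi> l) = 1" using ens unfolding ensemble_def by auto
    have "cmod (\<psi> l $ a) = cmod (u $ a)" for a by (rule pure_component[OF un ens])
    then show ?thesis unfolding F_def qfi_val[OF herm diag orth n1] qfi_val[OF herm diag orth un] by simp
  qed
  define S where "S = {(\<Sum>l<m. p l * F (\<psi> l)) | m p \<psi>. ensemble (proj u) m p \<psi>}"
  have "S = {mx}"
  proof
    show "S \<subseteq> {mx}"
    proof
      fix x assume "x \<in> S"
      then obtain m p \<psi> where x: "x = (\<Sum>l<m. p l * F (\<psi> l))" and e: "ensemble (proj u) m p \<psi>"
        unfolding S_def by blast
      have ps: "(\<Sum>l<m. p l) = 1" using e unfolding ensemble_def by auto
      have "(\<Sum>l<m. p l * F (\<psi> l)) = (\<Sum>l<m. p l * mx)"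
      proof (rule sum.cong[OF refl])
        fix l assume "l \<in> {..<m}"
        then have "l < m" by simp
        show "p l * F (\<psi> l) = p l * mx"
        proof (cases "p l > 0")
          case True then show ?thesis using eqF[OF e \<open>l < m\<close>] Fu by simp
        next
          case False
          then have "p l = 0" using e \<open>l < m\<close> unfolding ensemble_def by force
          then show ?thesis by simp
        qed
      qed
      also have "\<dots> = mx" using ps by (simp flip: sum_distrib_right)
      finally show "x \<in> {mx}" using x by simp
    qed
    have "ensemble (proj u) 1 (\<lambda>_. 1) (\<lambda>_. u)" unfolding ensemble_def using un by simp
    then have "(\<Sum>l<(1::nat). 1 * F u) \<in> S" unfolding S_def
      by (intro CollectI exI[of _ "1::nat"] exI[of _ "\<lambda>_::nat. 1::real"] exI[of _ "\<lambda>_::nat. u"] conjI) auto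
    then show "{mx} \<subseteq> S" using Fu by simp
  qed
  then have "Inf S = mx" by simp
  then show "Cmeas Z (proj (\<chi> j. cis (\<phi> j) / complex_of_real (sqrt (real CARD('n))))) \<theta>
              = 4 * (real CARD('n) - 1) / (real CARD('n))^2"
    unfolding Cmeas_def S_def F_def u_def mx_def .
qed


end
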